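(* Let $n=2k$ with $k\ge1$, let $\Omega\subseteq\mathbb{R}^{2k}$ be open, and let $f=[f_1,\dots,f_{2k}]:\Omega\to\mathbb{R}^{2k}$ be analytic on $\Omega$. Then: (1) (Cauchy–Riemann equations) for all $1\le m,i\le k$, on $\Omega$, $$\frac{\partial f_m}{\partial x_i}=\frac{\partial f_{m+k}}{\partial x_{i+k}},\qquad \frac{\partial f_{m+k}}{\partial x_i}=-\frac{\partial f_m}{\partial x_{i+k}};$$ (2) for all $1\le m,i\le k$, $\frac{\partial^2 f_m}{\partial x_i^2}+\frac{\partial^2 f_m}{\partial x_{i+k}^2}=0$ and $\frac{\partial^2 f_{m+k}}{\partial x_i^2}+\frac{\partial^2 f_{m+k}}{\partial x_{i+k}^2}=0$ on $\Omega$; (3) each component $f_m$, $1\le m\le 2k$, is harmonic on $\Omega$: it has continuous second order partial derivatives and $\sum_{i=1}^{2k}\frac{\partial^2 f_m}{\partial x_i^2}=0$.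
   Context: Let $n\ge2$ and let $\mathfrak g$ be the real $n\times n$ matrix with $\mathfrak g_{i,i+1}=1$ ($1\le i\le n-1$), $\mathfrak g_{n,1}=-1$, other entries $0$. For $u\in\mathbb{R}^n$ set $\varsigma(u)=\sum_{\ell=1}^n u_\ell\mathfrak g^{\ell-1}$ and $u\circledast v=\varsigma^{-1}(\varsigma(u)\varsigma(v))$; $\mathbb{R}^n$ with $\circledast$ is a commutative algebra with identity $e_1$. Let $\mathcal G_n=\{x:\det\varsigma(x)\ne0\}$, the group of invertible elements; write $\delta^{-1}$ for the $\circledast$-inverse of $\delta\in\mathcal G_n$. For an open $\Omega\subseteq\mathbb{R}^n$ and $f=[f_1,\dots,f_n]:\Omega\to\mathbb{R}^n$ (each $f_j$ real-valued), $f$ is differentiable at $a\in\Omega$ if the limit $f'(a)=\lim_{\delta\to0,\ \delta\in\mathcal G_n}\big(f(a+\delta)-f(a)\big)\circledast\delta^{-1}$ exists. $f$ is analytic on $\Omega$ if it is differentiable at every point of $\Omega$ and all second order partial derivatives $\partial^2 f_m/\partial x_i\partial x_j$ exist and are continuous on $\Omega$. *)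

theory Defs
  imports "HOL-Analysis.Analysis" "HOL-Library.Numeral_Type"
begin

text \<open>We model R^n with n = 2k as real^('k bit0), where CARD('k) = k >= 1.
  Coordinates are indexed 0-based: paper index j (1 <= j <= 2k) corresponds to
  the type element ix (j - 1).\<close>

definition idx :: "'k::finite bit0 \<Rightarrow> nat" where
  "idx a = nat (Rep_bit0 a)"

definition ix :: "nat \<Rightarrow> 'k::finite bit0" where
  "ix m = of_nat m"

definition gmat :: "real^('k::finite bit0)^('k bit0)" where
  "gmat = (\<chi> a b. if idx b = idx a + 1 then 1
                   else if idx a = CARD('k bit0) - 1 \<and> idx b = 0 then -1 else 0)"

primrec mpow :: "real^'n^'n \<Rightarrow> nat \<Rightarrow> real^'n^'n" where
  "mpow A 0 = mat 1"
| "mpow A (Suc l) = mpow A l ** A"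

definition vsig :: "real^('k::finite bit0) \<Rightarrow> real^('k bit0)^('k bit0)" where
  "vsig u = (\<Sum>l<CARD('k bit0). (u $ ix l) *\<^sub>R mpow gmat l)"

definition cmul :: "real^('k::finite bit0) \<Rightarrow> real^('k bit0) \<Rightarrow> real^('k bit0)" where
  "cmul u v = inv vsig (vsig u ** vsig v)"

definition cunit :: "real^('k::finite bit0)" where
  "cunit = axis (ix 0) 1"

definition Gn :: "(real^('k::finite bit0)) set" where
  "Gn = {x. det (vsig x) \<noteq> 0}"

definition cinv :: "real^('k::finite bit0) \<Rightarrow> real^('k bit0)" where
  "cinv d = (THE y. cmul d y = cunit)"

definition cdifferentiable_at ::
  "(real^('k::finite bit0) \<Rightarrow> real^('k bit0)) \<Rightarrow> real^('k bit0) \<Rightarrow> bool" where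
  "cdifferentiable_at f a \<longleftrightarrow>
     (\<exists>L. ((\<lambda>d. cmul (f (a + d) - f a) (cinv d)) \<longlongrightarrow> L) (at 0 within Gn))"

definition has_partial :: "'n::finite \<Rightarrow> (real^'n \<Rightarrow> real) \<Rightarrow> real^'n \<Rightarrow> bool" where
  "has_partial i g x \<longleftrightarrow> (\<lambda>t. g (x + t *\<^sub>R axis i 1)) differentiable (at 0)"

definition partial :: "'n::finite \<Rightarrow> (real^'n \<Rightarrow> real) \<Rightarrow> real^'n \<Rightarrow> real" where
  "partial i g x = deriv (\<lambda>t. g (x + t *\<^sub>R axis i 1)) 0"

definition C2_partials :: "(real^'n::finite) set \<Rightarrow> (real^'n \<Rightarrow> real) \<Rightarrow> bool" where
  "C2_partials S g \<longleftrightarrow>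
     (\<forall>i j. (\<forall>x\<in>S. has_partial j g x) \<and>
            (\<forall>x\<in>S. has_partial i (partial j g) x) \<and>
            continuous_on S (partial i (partial j g)))"

definition analytic_on_set ::
  "(real^('k::finite bit0)) set \<Rightarrow> (real^('k bit0) \<Rightarrow> real^('k bit0)) \<Rightarrow> bool" where
  "analytic_on_set S f \<longleftrightarrow>
     (\<forall>a\<in>S. cdifferentiable_at f a) \<and> (\<forall>m. C2_partials S (\<lambda>y. f y $ m))"

definition harmonic_on_set :: "(real^'n::finite) set \<Rightarrow> (real^'n \<Rightarrow> real) \<Rightarrow> bool" where
  "harmonic_on_set S g \<longleftrightarrow>
     C2_partials S g \<and> (\<forall>x\<in>S. (\<Sum>i\<in>UNIV. partial i (partial i g) x) = 0)"

end

theory Submission imports Defs begin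

lemma Rep_bit0_ge: "0 \<le> Rep_bit0 (a::'k::finite bit0)"
  using bit0.Rep_mod[of a] bit0.size0 by (metis pos_mod_sign)

lemma idx_lt: "idx (a::'k::finite bit0) < CARD('k bit0)"
  unfolding idx_def using bit0.Rep_less_n[of a] Rep_bit0_ge[of a] by linarith

lemma idx_ix: "m < CARD('k::finite bit0) \<Longrightarrow> idx (ix m :: 'k bit0) = m"
  unfolding idx_def ix_def bit0.of_nat_eq
  using bit0.Abs_inverse[of "int m", where 'a='k] by simp

lemma ix_idx: "ix (idx (a::'k::finite bit0)) = a"
  unfolding idx_def ix_def bit0.of_nat_eq
  using Rep_bit0_ge[of a] bit0.Rep_mod[of a, simplified] by (simp add: bit0.Rep_inverse)

lemma idx_eq_iff: "idx (a::'k::finite bit0) = idx b \<longleftrightarrow> a = b"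
  by (metis ix_idx)

lemma sum_idx:
  assumes "K < CARD('k::finite bit0)"
  shows "(\<Sum>e\<in>UNIV. (if idx (e::'k bit0) = K then X e else 0)) = (X (ix K) :: real)"
proof -
  have "\<And>e. (idx (e::'k bit0) = K) = (e = ix K)" using assms by (metis idx_ix ix_idx)
  then show ?thesis by (simp add: sum.delta')
qed

lemma gmat_entry: "gmat $ a $ b = (if idx b = idx a + 1 then 1
   else if idx a = CARD('k::finite bit0) - 1 \<and> idx (b::'k bit0) = 0 then -1 else 0)"
  by (simp add: gmat_def)

lemma mpow_entry:
  fixes c b :: "'k::finite bit0"
  shows "l \<le> CARD('k bit0) \<Longrightarrow> mpow gmat l $ c $ b =
    (if idx c + l < CARD('k bit0) then (if idx b = idx c + l then 1 else 0)
     else (if idx b + CARD('k bit0) = idx c + l then -1 else 0))"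
proof (induction l arbitrary: b)
  case 0
  then show ?case using idx_lt[of c] by (auto simp: mat_def idx_eq_iff)
next
  case (Suc l)
  let ?N = "CARD('k bit0)"
  have IH: "\<And>e. mpow gmat l $ c $ e = (if idx c + l < ?N then (if idx e = idx c + l then 1 else 0)
     else (if idx e + ?N = idx c + l then -1 else 0))" using Suc by simp
  have "mpow gmat (Suc l) $ c $ b = (\<Sum>e\<in>UNIV. mpow gmat l $ c $ e * gmat $ e $ b)"
    by (simp add: matrix_matrix_mult_def)
  also have "\<dots> = (if idx c + Suc l < ?N then (if idx b = idx c + Suc l then 1 else 0)
     else (if idx b + ?N = idx c + Suc l then -1 else 0))"
  proof (cases "idx c + l < ?N")
    case True
    have "(\<Sum>e\<in>UNIV. mpow gmat l $ c $ e * gmat $ e $ b)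
        = (\<Sum>e\<in>UNIV. (if idx e = idx c + l then gmat $ e $ b else 0))"
      using True by (intro sum.cong) (auto simp: IH)
    also have "\<dots> = gmat $ ix (idx c + l) $ b" using True by (rule sum_idx)
    also have "\<dots> = (if idx c + Suc l < ?N then (if idx b = idx c + Suc l then 1 else 0)
     else (if idx b + ?N = idx c + Suc l then -1 else 0))"
      using True idx_lt[of b] by (auto simp: gmat_entry idx_ix)
    finally show ?thesis .
  next
    case False
    define K where "K = idx c + l - ?N"
    have K: "K < ?N" "K + 1 < ?N" using False Suc.prems idx_lt[of c] unfolding K_def by auto
    have "(\<Sum>e\<in>UNIV. mpow gmat l $ c $ e * gmat $ e $ b)
        = (\<Sum>e\<in>UNIV. (if idx e = K then - gmat $ e $ b else 0))"
      using False by (intro sum.cong) (auto simp: IH K_def)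
    also have "\<dots> = - gmat $ ix K $ b" using K(1) by (rule sum_idx)
    also have "\<dots> = (if idx c + Suc l < ?N then (if idx b = idx c + Suc l then 1 else 0)
     else (if idx b + ?N = idx c + Suc l then -1 else 0))"
      using False K idx_lt[of b] by (auto simp: gmat_entry idx_ix K_def)
    finally show ?thesis .
  qed
  finally show ?case .
qed

lemma mpow_add: "mpow A (a + b) = mpow A a ** mpow A b"
  by (induction b) (simp_all add: matrix_mul_assoc)

lemma mpow_comm: "mpow A l ** A = A ** mpow A l"
proof -
  have "mpow A (l + 1) = mpow A (1 + l)" by simp
  then show ?thesis unfolding mpow_add by simp
qed

lemma mpow_comm2: "mpow A a ** mpow A b = mpow A b ** mpow A a"
  by (metis add.commute mpow_add)

lemma mpow_N: "mpow gmat CARD('k::finite bit0) = - (mat 1 :: real^'k bit0^'k bit0)"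
  by (auto simp: vec_eq_iff mpow_entry mat_def idx_eq_iff)

lemma sum_mmul_right: "(\<Sum>l\<in>L. M l) ** (A::real^'n^'n) = (\<Sum>l\<in>L. M l ** A)"
  apply (simp add: matrix_matrix_mult_def vec_eq_iff sum_component sum_distrib_right)
  using sum.swap by fastforce

lemma sum_mmul_left: "(A::real^'n^'n) ** (\<Sum>l\<in>L. M l) = (\<Sum>l\<in>L. A ** M l)"
  apply (simp add: matrix_matrix_mult_def vec_eq_iff sum_component sum_distrib_left)
  using sum.swap by fastforce

lemma vsig_comm: "vsig u ** gmat = gmat ** vsig u"
  unfolding vsig_def sum_mmul_right sum_mmul_left
  by (simp add: scalar_matrix_assoc[symmetric] matrix_scalar_ac mpow_comm)

lemma N_pos: "0 < CARD('k::finite bit0)" by simp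

lemma idx_0: "idx (ix 0 :: 'k::finite bit0) = 0"
  using idx_ix[OF N_pos] .

lemma vsig_entry: "vsig u $ a $ b = (\<Sum>l<CARD('k::finite bit0). u $ ix l * mpow gmat l $ a $ (b::'k bit0))"
  unfolding vsig_def by (simp add: sum_component)

lemma vsig_row0: "vsig u $ ix 0 $ (c::'k::finite bit0) = u $ c"
proof -
  have "vsig u $ ix 0 $ c = (\<Sum>l<CARD('k bit0). (if l = idx c then u $ ix l else 0))"
    unfolding vsig_entry by (intro sum.cong) (auto simp: mpow_entry idx_0)
  also have "\<dots> = u $ ix (idx c)" using idx_lt[of c] by (simp add: sum.delta)
  finally show ?thesis by (simp add: ix_idx)
qed

lemma vsig_inj: "inj (vsig :: real^'k::finite bit0 \<Rightarrow> _)"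
  by (rule injI) (metis vec_eq_iff vsig_row0)

lemma vsig_add: "vsig (u + v) = vsig u + vsig v"
  by (simp add: vsig_def scaleR_add_left sum.distrib)

lemma vsig_scaleR: "vsig (t *\<^sub>R u) = t *\<^sub>R vsig u"
  by (simp add: vsig_def scaleR_sum_right)

lemma vsig_minus: "vsig (u - v) = vsig u - vsig v"
  by (simp add: vsig_def scaleR_diff_left sum_subtractf)

lemma vsig_axis: "vsig (axis b 1) = mpow gmat (idx (b::'k::finite bit0))"
proof -
  have "vsig (axis b 1) = (\<Sum>l<CARD('k bit0). (if l = idx b then mpow gmat l else 0))"
    unfolding vsig_def by (intro sum.cong) (auto simp: axis_def ix_idx idx_ix)
  also have "\<dots> = mpow gmat (idx b)" using idx_lt[of b] by (simp add: sum.delta)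
  finally show ?thesis .
qed

lemma vsig_cunit: "vsig (cunit :: real^'k::finite bit0) = mat 1"
  unfolding cunit_def vsig_axis idx_0 by simp

lemma comm_zero:
  fixes N :: "real^'k::finite bit0^'k bit0"
  assumes "N ** gmat = gmat ** N" "\<And>c. N $ ix 0 $ c = 0"
  shows "N = 0"
proof -
  have "\<forall>c. N $ ix r $ c = 0" if "r < CARD('k bit0)" for r
    using that
  proof (induction r)
    case 0 then show ?case using assms(2) by simp
  next
    case (Suc r)
    have r: "r < CARD('k bit0)" "r + 1 < CARD('k bit0)" using Suc.prems by auto
    show ?case
    proof
      fix c
      have "(N ** gmat) $ ix r $ c = 0"
        using Suc.IH r by (simp add: matrix_matrix_mult_def)
      moreover have "(gmat ** N) $ ix r $ c = (\<Sum>e\<in>UNIV. (if idx e = r + 1 then N $ e $ c else 0))"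
        unfolding matrix_matrix_mult_def using r by (auto simp: gmat_entry idx_ix intro!: sum.cong)
      moreover have "\<dots> = N $ ix (r+1) $ c" using r(2) by (rule sum_idx)
      ultimately show "N $ ix (Suc r) $ c = 0" using assms(1) by simp
    qed
  qed
  then show ?thesis by (metis idx_lt ix_idx vec_eq_iff zero_index)
qed

lemma msub_l: "(A::real^'n^'n) ** (B - C) = A ** B - A ** C"
  by (simp add: matrix_matrix_mult_def vec_eq_iff sum_subtractf right_diff_distrib)

lemma msub_r: "(B - C) ** (A::real^'n^'n) = B ** A - C ** A"
  by (simp add: matrix_matrix_mult_def vec_eq_iff sum_subtractf left_diff_distrib)

definition row0 :: "real^'k::finite bit0^'k bit0 \<Rightarrow> real^'k bit0" where
  "row0 M = (\<chi> c. M $ ix 0 $ c)"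

lemma vsig_row0_comm:
  fixes M :: "real^'k::finite bit0^'k bit0"
  assumes "M ** gmat = gmat ** M"
  shows "vsig (row0 M) = M"
proof -
  let ?D = "M - vsig (row0 M)"
  have "?D ** gmat = gmat ** ?D"
    using assms vsig_comm[of "row0 M"]
    by (simp add: msub_l msub_r) 
  moreover have "\<And>c. ?D $ ix 0 $ c = 0" by (simp add: vsig_row0 row0_def)
  ultimately have "?D = 0" by (rule comm_zero)
  then show ?thesis by simp
qed

lemma comm_mult:
  assumes "A ** gmat = gmat ** A" "B ** gmat = gmat ** B"
  shows "(A ** B) ** gmat = gmat ** (A ** B)"
  by (metis assms matrix_mul_assoc)

lemma vsig_cmul: "vsig (cmul u v) = vsig u ** vsig (v::real^'k::finite bit0)"
proof -
  let ?X = "vsig u ** vsig v"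
  have X: "vsig (row0 ?X) = ?X" by (intro vsig_row0_comm comm_mult vsig_comm)
  have "cmul u v = row0 ?X" unfolding cmul_def
    by (metis X inv_f_f vsig_inj)
  then show ?thesis using X by simp
qed

lemma scaled_mpow_comm: "(c *\<^sub>R mpow gmat l) ** gmat = gmat ** (c *\<^sub>R mpow gmat l)"
  by (simp add: scalar_matrix_assoc[symmetric] matrix_scalar_ac mpow_comm)

lemma mscale_l: "(c *\<^sub>R A) ** (B::real^'n^'n) = c *\<^sub>R (A ** B)"
  by (simp add: scalar_matrix_assoc)

lemma mscale_r: "A ** (c *\<^sub>R B) = c *\<^sub>R ((A::real^'n^'n) ** B)"
  by (simp add: matrix_scalar_ac scalar_matrix_assoc)

definition Rinv :: "real \<Rightarrow> 'k::finite bit0 \<Rightarrow> real^'k bit0^'k bit0" where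
  "Rinv t b = (- 1 / t) *\<^sub>R mpow gmat (CARD('k bit0) - idx b)"

lemma Rinv_right:
  assumes "t \<noteq> 0"
  shows "vsig (t *\<^sub>R axis b 1) ** Rinv t (b::'k::finite bit0) = mat 1"
proof -
  have "vsig (t *\<^sub>R axis b 1) ** Rinv t b
      = (-1/t * t) *\<^sub>R (mpow gmat (idx b) ** mpow gmat (CARD('k bit0) - idx b))"
    unfolding vsig_scaleR vsig_axis Rinv_def
    by (simp only: mscale_l mscale_r scaleR_scaleR)
  also have "mpow gmat (idx b) ** mpow gmat (CARD('k bit0) - idx b) = mpow gmat (CARD('k bit0))"
    using idx_lt[of b] by (simp add: mpow_add[symmetric])
  finally show ?thesis using assms by (simp add: mpow_N[simplified])
qed

lemma Rinv_left:
  assumes "t \<noteq> 0"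
  shows "Rinv t b ** vsig (t *\<^sub>R axis (b::'k::finite bit0) 1) = mat 1"
proof -
  have "Rinv t b ** vsig (t *\<^sub>R axis b 1)
      = (t * (-1/t)) *\<^sub>R (mpow gmat (CARD('k bit0) - idx b) ** mpow gmat (idx b))"
    unfolding vsig_scaleR vsig_axis Rinv_def
    by (simp only: mscale_l mscale_r scaleR_scaleR)
  also have "\<dots> = (-1/t * t) *\<^sub>R (mpow gmat (idx b) ** mpow gmat (CARD('k bit0) - idx b))"
    by (metis mpow_comm2 mult.commute)
  also have "\<dots> = vsig (t *\<^sub>R axis b 1) ** Rinv t b"
    unfolding vsig_scaleR vsig_axis Rinv_def
    by (simp only: mscale_l mscale_r scaleR_scaleR)
  finally show ?thesis using Rinv_right[OF assms] by simp
qed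

lemma cinv_axis:
  assumes "t \<noteq> 0"
  shows "vsig (cinv (t *\<^sub>R axis b 1)) = Rinv t (b::'k::finite bit0)"
proof -
  let ?d = "t *\<^sub>R axis b 1"
  let ?y = "row0 (Rinv t b)"
  have vy: "vsig ?y = Rinv t b" unfolding Rinv_def by (intro vsig_row0_comm scaled_mpow_comm)
  have "cmul ?d ?y = cunit"
    using vsig_inj unfolding inj_def by (metis vsig_cmul vy Rinv_right[OF assms] vsig_cunit)
  moreover have "y = ?y" if "cmul ?d y = cunit" for y
  proof -
    have "vsig ?d ** vsig y = mat 1" using that by (metis vsig_cmul vsig_cunit)
    then have "Rinv t b ** (vsig ?d ** vsig y) = Rinv t b" by simp
    then have "vsig y = Rinv t b" by (simp add: matrix_mul_assoc Rinv_left[OF assms])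
    then show ?thesis using vy vsig_inj unfolding inj_def by metis
  qed
  ultimately have "cinv ?d = ?y" unfolding cinv_def by (rule the_equality)
  then show ?thesis using vy by simp
qed

lemma axis_in_Gn:
  assumes "t \<noteq> 0"
  shows "t *\<^sub>R axis b 1 \<in> (Gn :: (real^'k::finite bit0) set)"
proof -
  have "invertible (vsig (t *\<^sub>R axis b 1))"
    unfolding invertible_def using Rinv_left[OF assms] Rinv_right[OF assms] by blast
  then show ?thesis unfolding Gn_def by (simp add: invertible_det_nz)
qed

lemma cdiff_axis_deriv:
  fixes f :: "real^'k::finite bit0 \<Rightarrow> real^'k bit0"
  assumes L: "((\<lambda>d. cmul (f (a + d) - f a) (cinv d)) \<longlongrightarrow> L) (at 0 within Gn)"
  shows "((\<lambda>t. f (a + t *\<^sub>R axis b 1) $ m) has_real_derivative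
            (\<Sum>c\<in>UNIV. L $ c * mpow gmat (idx b) $ c $ m)) (at 0)"
proof -
  let ?e = "axis b 1 :: real^'k bit0"
  let ?H = "\<lambda>t. cmul (f (a + t *\<^sub>R ?e) - f a) (cinv (t *\<^sub>R ?e))"
  let ?P = "mpow gmat (idx b)"
  have ev: "\<forall>\<^sub>F t in at (0::real). t \<noteq> 0" by (simp add: eventually_at_filter)
  have "((\<lambda>t. t *\<^sub>R ?e) \<longlongrightarrow> 0 *\<^sub>R ?e) (at (0::real))" by (intro tendsto_intros)
  then have t0: "((\<lambda>t. t *\<^sub>R ?e) \<longlongrightarrow> 0) (at (0::real))" by simp
  have "\<forall>\<^sub>F t in at (0::real). t *\<^sub>R ?e \<in> Gn - {0}"
    using ev by eventually_elim (auto simp: axis_in_Gn)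
  with t0 have "filterlim (\<lambda>t. t *\<^sub>R ?e) (at 0 within Gn) (at (0::real))"
    by (intro filterlim_at_withinI)
  from filterlim_compose[OF L this] have H: "(?H \<longlongrightarrow> L) (at 0)" .
  have "((\<lambda>t. vsig (?H t)) \<longlongrightarrow> vsig L) (at 0)"
    unfolding vsig_def by (intro tendsto_intros H)
  then have "((\<lambda>t. \<Sum>c\<in>UNIV. vsig (?H t) $ ix 0 $ c * ?P $ c $ m) \<longlongrightarrow>
      (\<Sum>c\<in>UNIV. vsig L $ ix 0 $ c * ?P $ c $ m)) (at 0)"
    by (intro tendsto_intros)
  then have lim: "((\<lambda>t. \<Sum>c\<in>UNIV. vsig (?H t) $ ix 0 $ c * ?P $ c $ m) \<longlongrightarrow>
      (\<Sum>c\<in>UNIV. L $ c * ?P $ c $ m)) (at 0)"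
    by (simp add: vsig_row0)
  have eq: "(\<Sum>c\<in>UNIV. vsig (?H t) $ ix 0 $ c * ?P $ c $ m)
      = (f (a + t *\<^sub>R ?e) $ m - f (a + 0 *\<^sub>R ?e) $ m) / (t - 0)" if t: "t \<noteq> 0" for t
  proof -
    let ?D = "f (a + t *\<^sub>R ?e) - f a"
    let ?X = "vsig ?D ** Rinv t b"
    have vH: "vsig (?H t) = ?X" by (simp add: vsig_cmul cinv_axis[OF t])
    have "?X ** vsig (t *\<^sub>R ?e) = vsig ?D"
      by (simp add: matrix_mul_assoc[symmetric] Rinv_left[OF t])
    moreover have "?X ** vsig (t *\<^sub>R ?e) = t *\<^sub>R (?X ** ?P)"
      by (simp add: vsig_scaleR vsig_axis mscale_r)
    ultimately have "(t *\<^sub>R (?X ** ?P)) $ ix 0 $ m = vsig ?D $ ix 0 $ m" by simp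
    then have "t * (?X ** ?P) $ ix 0 $ m = ?D $ m" by (simp add: vsig_row0)
    then have "(?X ** ?P) $ ix 0 $ m = ?D $ m / t" using t by (simp add: field_simps)
    then show ?thesis using vH by (simp add: matrix_matrix_mult_def)
  qed
  have "((\<lambda>y. (f (a + y *\<^sub>R ?e) $ m - f (a + 0 *\<^sub>R ?e) $ m) / (y - 0)) \<longlongrightarrow>
      (\<Sum>c\<in>UNIV. L $ c * ?P $ c $ m)) (at 0)"
  proof -
    have "\<forall>\<^sub>F y in at 0. (\<Sum>c\<in>UNIV. vsig (?H y) $ ix 0 $ c * ?P $ c $ m)
      = (f (a + y *\<^sub>R ?e) $ m - f (a + 0 *\<^sub>R ?e) $ m) / (y - 0)"
      using ev by eventually_elim (rule eq)
    from Lim_transform_eventually[OF lim this] show ?thesis .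
  qed
  then show ?thesis by (simp add: has_field_derivative_iff)
qed

lemma partial_formula:
  fixes f :: "real^'k::finite bit0 \<Rightarrow> real^'k bit0"
  assumes "((\<lambda>d. cmul (f (a + d) - f a) (cinv d)) \<longlongrightarrow> L) (at 0 within Gn)"
  shows "partial b (\<lambda>y. f y $ m) a = (\<Sum>c\<in>UNIV. L $ c * mpow gmat (idx b) $ c $ m)"
  unfolding partial_def using cdiff_axis_deriv[OF assms] by (rule DERIV_imp_deriv)

lemma CR:
  fixes f :: "real^'k::finite bit0 \<Rightarrow> real^'k bit0"
  assumes "cdifferentiable_at f a" "m < CARD('k)" "i < CARD('k)"
  shows "partial (ix i) (\<lambda>y. f y $ ix m) a
              = partial (ix (i + CARD('k))) (\<lambda>y. f y $ ix (m + CARD('k))) a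
          \<and> partial (ix i) (\<lambda>y. f y $ ix (m + CARD('k))) a
              = - partial (ix (i + CARD('k))) (\<lambda>y. f y $ ix m) a"
proof -
  obtain L where L: "((\<lambda>d. cmul (f (a + d) - f a) (cinv d)) \<longlongrightarrow> L) (at 0 within Gn)"
    using assms(1) unfolding cdifferentiable_at_def by blast
  let ?K = "CARD('k)"
  have N: "CARD('k bit0) = 2 * ?K" by simp
  have ii: "idx (ix i :: 'k bit0) = i" "idx (ix (i + ?K) :: 'k bit0) = i + ?K"
    using assms by (auto intro!: idx_ix)
  have mm: "idx (ix m :: 'k bit0) = m" "idx (ix (m + ?K) :: 'k bit0) = m + ?K"
    using assms by (auto intro!: idx_ix)
  have 1: "mpow gmat i $ c $ (ix m :: 'k bit0) = mpow gmat (i + ?K) $ c $ ix (m + ?K)" for c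
  proof -
    have "idx c < 2 * ?K" using idx_lt[of c] by simp
    then show ?thesis using assms by (auto simp: mpow_entry mm)
  qed
  have 2: "mpow gmat i $ c $ (ix (m + ?K) :: 'k bit0) = - mpow gmat (i + ?K) $ c $ ix m" for c
  proof -
    have "idx c < 2 * ?K" using idx_lt[of c] by simp
    then show ?thesis using assms by (auto simp: mpow_entry mm)
  qed
  show ?thesis
    unfolding partial_formula[OF L] ii
    using 1 2 by (simp add: sum_negf[symmetric])
qed

lemma line_deriv:
  assumes "has_partial i g (y + s *\<^sub>R axis i 1)"
  shows "((\<lambda>\<sigma>. g (y + \<sigma> *\<^sub>R axis i 1)) has_real_derivative partial i g (y + s *\<^sub>R axis i 1)) (at s)"
proof -
  let ?G = "\<lambda>\<sigma>. g (y + \<sigma> *\<^sub>R axis i 1)"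
  have "((\<lambda>t. g (y + s *\<^sub>R axis i 1 + t *\<^sub>R axis i 1)) has_real_derivative partial i g (y + s *\<^sub>R axis i 1)) (at 0)"
    using assms unfolding has_partial_def partial_def by (simp add: DERIV_deriv_iff_real_differentiable)
  moreover have "(\<lambda>t. g (y + s *\<^sub>R axis i 1 + t *\<^sub>R axis i 1)) = (\<lambda>t. ?G (t + s))"
    by (rule ext) (simp add: scaleR_add_left algebra_simps)
  ultimately have "((\<lambda>t. ?G (t + s)) has_real_derivative partial i g (y + s *\<^sub>R axis i 1)) (at 0)" by simp
  then have "(?G has_real_derivative partial i g (y + s *\<^sub>R axis i 1)) (at (0 + s))"
    by (simp only: DERIV_shift)
  then show ?thesis by simp
qed

lemma schwarz:
  fixes g :: "real^'n::finite \<Rightarrow> real"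
  assumes S: "open S" "x \<in> S" and C2: "C2_partials S g"
  shows "partial i (partial j g) x = partial j (partial i g) x"
proof -
  let ?u = "axis i 1 :: real^'n" and ?v = "axis j 1 :: real^'n"
  define p where "p = (\<lambda>\<sigma> \<tau>. x + \<sigma> *\<^sub>R ?u + \<tau> *\<^sub>R ?v)"
  have pI: "p \<sigma> \<tau> = (x + \<tau> *\<^sub>R ?v) + \<sigma> *\<^sub>R ?u" for \<sigma> \<tau> by (simp add: p_def algebra_simps)
  have pJ: "p \<sigma> \<tau> = (x + \<sigma> *\<^sub>R ?u) + \<tau> *\<^sub>R ?v" for \<sigma> \<tau> by (simp add: p_def)
  define F where "F = partial j (partial i g)"
  define G where "G = partial i (partial j g)"
  obtain r where r: "r > 0" "ball x r \<subseteq> S" using S by (meson open_contains_ball)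
  have inS: "p \<sigma> \<tau> \<in> S \<and> dist (p \<sigma> \<tau>) x \<le> 2 * e"
    if "0 \<le> \<sigma>" "\<sigma> \<le> e" "0 \<le> \<tau>" "\<tau> \<le> e" "e < r / 2" for \<sigma> \<tau> e
  proof -
    have "dist (p \<sigma> \<tau>) x = norm (\<sigma> *\<^sub>R ?u + \<tau> *\<^sub>R ?v)" by (simp add: p_def dist_norm)
    also have "\<dots> \<le> norm (\<sigma> *\<^sub>R ?u) + norm (\<tau> *\<^sub>R ?v)" by (rule norm_triangle_ineq)
    also have "\<dots> \<le> 2 * e" using that by simp
    finally show ?thesis using that r by (auto simp: dist_commute)
  qed
  have hpI: "\<And>h y. (\<forall>y\<in>S. has_partial i h y) \<Longrightarrow> y \<in> S \<Longrightarrow> has_partial i h y" by blast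
  have C2': "\<forall>y\<in>S. has_partial a h y" if "h = g \<or> (\<exists>b. h = partial b g)" for a h
    using C2 that unfolding C2_partials_def by blast
  have dI: "((\<lambda>\<sigma>'. h (p \<sigma>' \<tau>)) has_real_derivative partial i h (p \<sigma> \<tau>)) (at \<sigma>)"
    if "p \<sigma> \<tau> \<in> S" "h = g \<or> (\<exists>b. h = partial b g)" for \<sigma> \<tau> h
    using line_deriv[of i h "x + \<tau> *\<^sub>R ?v" \<sigma>] C2'[OF that(2)] that(1) by (simp add: pI)
  have dJ: "((\<lambda>\<tau>'. h (p \<sigma> \<tau>')) has_real_derivative partial j h (p \<sigma> \<tau>)) (at \<tau>)"
    if "p \<sigma> \<tau> \<in> S" "h = g \<or> (\<exists>b. h = partial b g)" for \<sigma> \<tau> h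
    using line_deriv[of j h "x + \<sigma> *\<^sub>R ?u" \<tau>] C2'[OF that(2)] that(1) by (simp add: pJ)
  have key: "\<exists>y z. dist y x \<le> 2 * e \<and> dist z x \<le> 2 * e \<and> y \<in> S \<and> z \<in> S \<and> F y = G z"
    if e: "0 < e" "e < r / 2" for e
  proof -
    define \<Delta> where "\<Delta> = g (p e e) - g (p e 0) - g (p 0 e) + g (p 0 0)"
    have inS': "p \<sigma> \<tau> \<in> S" if "0 \<le> \<sigma>" "\<sigma> \<le> e" "0 \<le> \<tau>" "\<tau> \<le> e" for \<sigma> \<tau>
      using inS[OF that e(2)] by blast
    have D1: "((\<lambda>\<sigma>. g (p \<sigma> e) - g (p \<sigma> 0)) has_real_derivative
        partial i g (p \<sigma> e) - partial i g (p \<sigma> 0)) (at \<sigma>)" if "0 \<le> \<sigma>" "\<sigma> \<le> e" for \<sigma>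
      using that e by (intro DERIV_diff dI inS') auto
    obtain \<sigma>1 where s1: "0 < \<sigma>1" "\<sigma>1 < e"
      "(g (p e e) - g (p e 0)) - (g (p 0 e) - g (p 0 0)) = (e - 0) * (partial i g (p \<sigma>1 e) - partial i g (p \<sigma>1 0))"
      using MVT2[of 0 e "\<lambda>\<sigma>. g (p \<sigma> e) - g (p \<sigma> 0)" "\<lambda>\<sigma>. partial i g (p \<sigma> e) - partial i g (p \<sigma> 0)", OF e(1) D1]
      by auto
    have D2: "((\<lambda>\<tau>. partial i g (p \<sigma>1 \<tau>)) has_real_derivative F (p \<sigma>1 \<tau>)) (at \<tau>)"
      if "0 \<le> \<tau>" "\<tau> \<le> e" for \<tau>
      unfolding F_def using that s1 by (intro dJ inS') auto
    obtain \<tau>1 where t1: "0 < \<tau>1" "\<tau>1 < e"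
      "partial i g (p \<sigma>1 e) - partial i g (p \<sigma>1 0) = (e - 0) * F (p \<sigma>1 \<tau>1)"
      using MVT2[of 0 e "\<lambda>\<tau>. partial i g (p \<sigma>1 \<tau>)" "\<lambda>\<tau>. F (p \<sigma>1 \<tau>)", OF e(1) D2] by auto
    have D3: "((\<lambda>\<tau>. g (p e \<tau>) - g (p 0 \<tau>)) has_real_derivative
        partial j g (p e \<tau>) - partial j g (p 0 \<tau>)) (at \<tau>)" if "0 \<le> \<tau>" "\<tau> \<le> e" for \<tau>
      using that e by (intro DERIV_diff dJ inS') auto
    obtain \<tau>2 where t2: "0 < \<tau>2" "\<tau>2 < e"
      "(g (p e e) - g (p 0 e)) - (g (p e 0) - g (p 0 0)) = (e - 0) * (partial j g (p e \<tau>2) - partial j g (p 0 \<tau>2))"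
      using MVT2[of 0 e "\<lambda>\<tau>. g (p e \<tau>) - g (p 0 \<tau>)" "\<lambda>\<tau>. partial j g (p e \<tau>) - partial j g (p 0 \<tau>)", OF e(1) D3]
      by auto
    have D4: "((\<lambda>\<sigma>. partial j g (p \<sigma> \<tau>2)) has_real_derivative G (p \<sigma> \<tau>2)) (at \<sigma>)"
      if "0 \<le> \<sigma>" "\<sigma> \<le> e" for \<sigma>
      unfolding G_def using that t2 by (intro dI inS') auto
    obtain \<sigma>2 where s2: "0 < \<sigma>2" "\<sigma>2 < e"
      "partial j g (p e \<tau>2) - partial j g (p 0 \<tau>2) = (e - 0) * G (p \<sigma>2 \<tau>2)"
      using MVT2[of 0 e "\<lambda>\<sigma>. partial j g (p \<sigma> \<tau>2)" "\<lambda>\<sigma>. G (p \<sigma> \<tau>2)", OF e(1) D4] by auto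
    have "e * (e * F (p \<sigma>1 \<tau>1)) = e * (e * G (p \<sigma>2 \<tau>2))"
      using s1(3) t1(3) t2(3) s2(3) by (simp add: algebra_simps)
    then have "F (p \<sigma>1 \<tau>1) = G (p \<sigma>2 \<tau>2)" using e by simp
    then show ?thesis using inS[of \<sigma>1 e \<tau>1] inS[of \<sigma>2 e \<tau>2] s1 t1 s2 t2 e by (intro exI[of _ "p \<sigma>1 \<tau>1"] exI[of _ "p \<sigma>2 \<tau>2"]) auto
  qed
  have cF: "continuous_on S F" and cG: "continuous_on S G"
    using C2 unfolding C2_partials_def F_def G_def by blast+
  show ?thesis
  proof (rule ccontr)
    assume ne: "\<not> ?thesis"
    define \<epsilon> where "\<epsilon> = \<bar>F x - G x\<bar> / 2"
    have \<epsilon>: "\<epsilon> > 0" using ne unfolding \<epsilon>_def F_def G_def by simp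
    obtain d1 where d1: "d1 > 0" "\<And>y. y \<in> S \<Longrightarrow> dist y x < d1 \<Longrightarrow> dist (F y) (F x) < \<epsilon>"
      using cF S(2) \<epsilon> unfolding continuous_on_iff by blast
    obtain d2 where d2: "d2 > 0" "\<And>y. y \<in> S \<Longrightarrow> dist y x < d2 \<Longrightarrow> dist (G y) (G x) < \<epsilon>"
      using cG S(2) \<epsilon> unfolding continuous_on_iff by blast
    define e where "e = min (min d1 d2) r / 4"
    have e: "0 < e" "e < r / 2" "2 * e < d1" "2 * e < d2" using d1 d2 r unfolding e_def by auto
    obtain y z where yz: "dist y x \<le> 2 * e" "dist z x \<le> 2 * e" "y \<in> S" "z \<in> S" "F y = G z"
      using key[OF e(1,2)] by blast
    have "dist (F y) (F x) < \<epsilon>" using d1(2)[OF yz(3)] yz(1) e by simp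
    moreover have "dist (G z) (G x) < \<epsilon>" using d2(2)[OF yz(4)] yz(2) e by simp
    ultimately have "\<bar>F x - G x\<bar> < 2 * \<epsilon>" using yz(5) by (simp add: dist_real_def)
    then show False unfolding \<epsilon>_def by simp
  qed
qed

lemma partial_cong:
  assumes "open S" "x \<in> S" "\<And>y. y \<in> S \<Longrightarrow> F y = G y"
  shows "partial i F x = partial i G x"
proof -
  obtain r where r: "r > 0" "ball x r \<subseteq> S" using assms by (meson open_contains_ball)
  have "\<forall>\<^sub>F t in nhds (0::real). F (x + t *\<^sub>R axis i 1) = G (x + t *\<^sub>R axis i 1)"
  proof -
    have "\<forall>\<^sub>F t in nhds (0::real). dist t 0 < r" unfolding eventually_nhds_metric using r(1) by blast
    then show ?thesis
    proof eventually_elim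
      case (elim t)
      then have "x + t *\<^sub>R axis i 1 \<in> ball x r" by (simp add: dist_norm)
      then show ?case using r(2) assms(3) by blast
    qed
  qed
  then show ?thesis unfolding partial_def by (rule deriv_cong_ev) simp
qed

lemma partial_uminus:
  assumes "has_partial i F x"
  shows "partial i (\<lambda>y. - F y) x = - partial i F x"
proof -
  have "DERIV (\<lambda>t. F (x + t *\<^sub>R axis i 1)) 0 :> partial i F x"
    using assms unfolding has_partial_def partial_def by (simp add: DERIV_deriv_iff_real_differentiable)
  then have "DERIV (\<lambda>t. - F (x + t *\<^sub>R axis i 1)) 0 :> - partial i F x" by (rule DERIV_minus)
  then show ?thesis unfolding partial_def by (rule DERIV_imp_deriv)
qed

lemma sum_double: "(\<Sum>l<(K::nat)+K. F l) = (\<Sum>i<K. F i + F (i + K) :: real)"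
proof -
  have "(\<Sum>l<K+K. F l) = sum F {0..<K} + sum F {K..<K+K}"
    by (simp add: lessThan_atLeast0 sum.atLeastLessThan_concat)
  also have "sum F {K..<K+K} = sum (\<lambda>i. F (i + K)) {0..<K}"
    using sum.shift_bounds_nat_ivl[of F 0 K K] by simp
  finally show ?thesis by (simp add: lessThan_atLeast0 sum.distrib)
qed

lemma sum_split_bit0:
  "(\<Sum>c\<in>UNIV. T c) = (\<Sum>i<CARD('k). T (ix i :: 'k::finite bit0) + T (ix (i + CARD('k))) :: real)"
proof -
  have U: "(UNIV :: 'k bit0 set) = ix ` {..<CARD('k) + CARD('k)}"
  proof (intro set_eqI iffI)
    fix c :: "'k bit0"
    have "idx c \<in> {..<CARD('k) + CARD('k)}" using idx_lt[of c] by simp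
    then show "c \<in> ix ` {..<CARD('k) + CARD('k)}" by (rule rev_image_eqI) (simp add: ix_idx)
  qed simp
  have inj: "inj_on (ix :: nat \<Rightarrow> 'k bit0) {..<CARD('k) + CARD('k)}"
    by (rule inj_onI) (metis idx_ix lessThan_iff card_bit0 mult_2)
  show ?thesis unfolding U sum.reindex[OF inj] by (simp add: sum_double)
qed

theorem mainTheorem9:
  fixes \<Omega> :: "(real^('k::finite bit0)) set"
    and f :: "real^('k bit0) \<Rightarrow> real^('k bit0)"
  assumes "open \<Omega>"
    and "analytic_on_set \<Omega> f"
  shows "(\<forall>m<CARD('k). \<forall>i<CARD('k). \<forall>x\<in>\<Omega>.
            partial (ix i) (\<lambda>y. f y $ ix m) x
              = partial (ix (i + CARD('k))) (\<lambda>y. f y $ ix (m + CARD('k))) x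
          \<and> partial (ix i) (\<lambda>y. f y $ ix (m + CARD('k))) x
              = - partial (ix (i + CARD('k))) (\<lambda>y. f y $ ix m) x)
       \<and> (\<forall>m<CARD('k). \<forall>i<CARD('k). \<forall>x\<in>\<Omega>.
            partial (ix i) (partial (ix i) (\<lambda>y. f y $ ix m)) x
              + partial (ix (i + CARD('k))) (partial (ix (i + CARD('k))) (\<lambda>y. f y $ ix m)) x = 0
          \<and> partial (ix i) (partial (ix i) (\<lambda>y. f y $ ix (m + CARD('k)))) x
              + partial (ix (i + CARD('k))) (partial (ix (i + CARD('k))) (\<lambda>y. f y $ ix (m + CARD('k)))) x = 0)
       \<and> (\<forall>m. harmonic_on_set \<Omega> (\<lambda>y. f y $ m))"
proof -
  have cd: "\<forall>a\<in>\<Omega>. cdifferentiable_at f a" and C2: "\<And>m. C2_partials \<Omega> (\<lambda>y. f y $ m)"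
    using assms(2) unfolding analytic_on_set_def by auto
  have hp2: "\<And>m a b y. y \<in> \<Omega> \<Longrightarrow> has_partial a (partial b (\<lambda>y. f y $ m)) y"
    using C2 unfolding C2_partials_def by blast
  let ?K = "CARD('k)"
  have P1: "\<forall>m<?K. \<forall>i<?K. \<forall>x\<in>\<Omega>.
            partial (ix i) (\<lambda>y. f y $ ix m) x
              = partial (ix (i + CARD('k))) (\<lambda>y. f y $ ix (m + CARD('k))) x
          \<and> partial (ix i) (\<lambda>y. f y $ ix (m + CARD('k))) x
              = - partial (ix (i + CARD('k))) (\<lambda>y. f y $ ix m) x"
    using CR cd by blast
  have P2: "\<forall>m<?K. \<forall>i<?K. \<forall>x\<in>\<Omega>.
            partial (ix i) (partial (ix i) (\<lambda>y. f y $ ix m)) x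
              + partial (ix (i + CARD('k))) (partial (ix (i + CARD('k))) (\<lambda>y. f y $ ix m)) x = 0
          \<and> partial (ix i) (partial (ix i) (\<lambda>y. f y $ ix (m + CARD('k)))) x
              + partial (ix (i + CARD('k))) (partial (ix (i + CARD('k))) (\<lambda>y. f y $ ix (m + CARD('k)))) x = 0"
  proof (intro allI impI ballI)
    fix m i x assume m: "m < ?K" and i: "i < ?K" and x: "x \<in> \<Omega>"
    let ?a = "ix i :: 'k bit0" and ?b = "ix (i + ?K) :: 'k bit0"
    let ?fm = "\<lambda>y. f y $ ix m" and ?fk = "\<lambda>y. f y $ ix (m + ?K)"
    have cr1: "\<And>y. y \<in> \<Omega> \<Longrightarrow> partial ?a ?fm y = partial ?b ?fk y"
     and cr2: "\<And>y. y \<in> \<Omega> \<Longrightarrow> partial ?a ?fk y = - partial ?b ?fm y"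
      using P1 m i by blast+
    have cr2': "\<And>y. y \<in> \<Omega> \<Longrightarrow> partial ?b ?fm y = - partial ?a ?fk y"
      using cr2 by simp
    have cr1': "\<And>y. y \<in> \<Omega> \<Longrightarrow> partial ?b ?fk y = partial ?a ?fm y"
      using cr1 by simp
    have "partial ?a (partial ?a ?fm) x = partial ?a (partial ?b ?fk) x"
      by (rule partial_cong[OF assms(1) x cr1])
    moreover have "partial ?b (partial ?b ?fm) x = partial ?b (\<lambda>y. - partial ?a ?fk y) x"
      by (rule partial_cong[OF assms(1) x cr2'])
    moreover have "\<dots> = - partial ?b (partial ?a ?fk) x"
      by (rule partial_uminus[OF hp2[OF x]])
    moreover have "partial ?a (partial ?b ?fk) x = partial ?b (partial ?a ?fk) x"
      by (rule schwarz[OF assms(1) x C2])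
    ultimately have A: "partial ?a (partial ?a ?fm) x + partial ?b (partial ?b ?fm) x = 0" by simp
    have "partial ?a (partial ?a ?fk) x = partial ?a (\<lambda>y. - partial ?b ?fm y) x"
      by (rule partial_cong[OF assms(1) x cr2])
    moreover have "\<dots> = - partial ?a (partial ?b ?fm) x"
      by (rule partial_uminus[OF hp2[OF x]])
    moreover have "partial ?b (partial ?b ?fk) x = partial ?b (partial ?a ?fm) x"
      by (rule partial_cong[OF assms(1) x cr1'])
    moreover have "partial ?a (partial ?b ?fm) x = partial ?b (partial ?a ?fm) x"
      by (rule schwarz[OF assms(1) x C2])
    ultimately have B: "partial ?a (partial ?a ?fk) x + partial ?b (partial ?b ?fk) x = 0" by simp
    show "partial ?a (partial ?a ?fm) x + partial ?b (partial ?b ?fm) x = 0 \<and>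
          partial ?a (partial ?a ?fk) x + partial ?b (partial ?b ?fk) x = 0"
      using A B by blast
  qed
  have P3: "\<forall>m. harmonic_on_set \<Omega> (\<lambda>y. f y $ m)"
  proof
    fix m :: "'k bit0"
    have "(\<Sum>c\<in>UNIV. partial c (partial c (\<lambda>y. f y $ m)) x) = 0" if x: "x \<in> \<Omega>" for x
    proof -
      have "partial (ix i) (partial (ix i) (\<lambda>y. f y $ m)) x
          + partial (ix (i + ?K)) (partial (ix (i + ?K)) (\<lambda>y. f y $ m)) x = 0" if i: "i < ?K" for i
      proof (cases "idx m < ?K")
        case True
        then have "m = ix (idx m)" by (simp add: ix_idx)
        then show ?thesis using P2 True i x by metis
      next
        case False
        have "m = ix (idx m - ?K + ?K)" using False by (simp add: ix_idx)
        moreover have "idx m - ?K < ?K" using False idx_lt[of m] by simp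
        ultimately show ?thesis using P2 i x by metis
      qed
      then show ?thesis unfolding sum_split_bit0 by simp
    qed
    then show "harmonic_on_set \<Omega> (\<lambda>y. f y $ m)" unfolding harmonic_on_set_def using C2 by blast
  qed
  show ?thesis using P1 P2 P3 by blast
qed

end
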